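(* Let $\tau>0$, $a>4$, and let $s,d$ be integers with $1\le s<d/2$. The estimator $\hat\sigma^2=\frac1d\sum_{k=1}^{d-s}Y^2_{(k)}$ satisfies $$\sup_{P_\xi\in\mathcal P_{a,\tau}}\sup_{\sigma>0}\sup_{\theta\in\Theta_s}\frac{\mathbf E_{\theta,P_\xi,\sigma}(\hat\sigma^2-\sigma^2)^2}{\sigma^4}\le C\max\Big(\frac1{\sqrt d},\Big(\frac sd\Big)^{1-\frac2a}\Big)^2,$$ where $C>0$ depends only on $a$ and $\tau$.
   Context: Model: $Y_i=\theta_i+\sigma\xi_i$, $i=1,\dots,d$, $\theta\in\mathbb R^d$, $\sigma>0$, $\xi_i$ i.i.d. with distribution $P_\xi$, $\mathbf E\xi_1=0,\mathbf E\xi_1^2=1$; $\mathbf E_{\theta,P_\xi,\sigma}$ expectation; $\Theta_s=\{\theta:\|\theta\|_0\le s\}$. For $\tau>0,a\ge2$, $\mathcal P_{a,\tau}$: distributions with $\mathbf E\xi_1=0,\mathbf E\xi_1^2=1$, $\mathbf P(|\xi_1|>t)\le(\tau/t)^a$ for all $t\ge2$. $Y^2_{(1)}\le\dots\le Y^2_{(d)}$ are the ordered values of $Y_1^2,\dots,Y_d^2$. *)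

theory Defs
  imports "HOL-Probability.Probability"
begin

definition noise_class :: "real \<Rightarrow> real \<Rightarrow> real measure set" where
  "noise_class a \<tau> = {P. prob_space P \<and> sets P = sets borel \<and>
      integrable P (\<lambda>x. x) \<and> (\<integral>x. x \<partial>P) = 0 \<and>
      integrable P (\<lambda>x. x\<^sup>2) \<and> (\<integral>x. x\<^sup>2 \<partial>P) = 1 \<and>
      (\<forall>t\<ge>2. measure P {x. \<bar>x\<bar> > t} \<le> (\<tau> / t) powr a)}"

definition sparse_vecs :: "nat \<Rightarrow> nat \<Rightarrow> (nat \<Rightarrow> real) set" where
  "sparse_vecs d s = {\<theta>. card {i\<in>{..<d}. \<theta> i \<noteq> 0} \<le> s}"

definition obs :: "(nat \<Rightarrow> real) \<Rightarrow> real \<Rightarrow> (nat \<Rightarrow> real) \<Rightarrow> nat \<Rightarrow> real" where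
  "obs \<theta> \<sigma> \<xi> i = \<theta> i + \<sigma> * \<xi> i"

definition sigma_hat_sq :: "nat \<Rightarrow> nat \<Rightarrow> (nat \<Rightarrow> real) \<Rightarrow> real" where
  "sigma_hat_sq d s Y =
     sum_list (take (d - s) (sort (map (\<lambda>i. (Y i)\<^sup>2) [0..<d]))) / real d"

definition noise_law :: "nat \<Rightarrow> real measure \<Rightarrow> (nat \<Rightarrow> real) measure" where
  "noise_law d P = PiM {..<d} (\<lambda>_. P)"

end

theory Submission
  imports Defs
begin



lemma sq_sum_PiM:
  fixes h :: "real \<Rightarrow> real"
  assumes P: "prob_space P" and hm: "h \<in> borel_measurable P"
    and hi: "integrable P h" and hi2: "integrable P (\<lambda>x. (h x)\<^sup>2)"
  shows "(\<integral>\<^sup>+ x. ennreal ((\<Sum>i<d. h (x i))\<^sup>2) \<partial>PiM {..<d} (\<lambda>_. P))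
     = ennreal (real d * (\<integral>x. (h x)\<^sup>2 \<partial>P) + (real d ^ 2 - real d) * (\<integral>x. h x \<partial>P)\<^sup>2)"
proof -
  interpret P: prob_space P by fact
  interpret product_sigma_finite "\<lambda>_. P" by unfold_locales
  let ?M = "PiM {..<d} (\<lambda>_. P)"
  have pair: "integrable ?M (\<lambda>x. h (x i) * h (x j)) \<and>
      (\<integral>x. h (x i) * h (x j) \<partial>?M) = (if i = j then (\<integral>x. (h x)\<^sup>2 \<partial>P) else (\<integral>x. h x \<partial>P)\<^sup>2)"
    if "i < d" "j < d" for i j
  proof (cases "i = j")
    case True
    define f where "f k = (\<lambda>x. if k = i then (h x)\<^sup>2 else (1::real))" for k
    have e: "(\<Prod>k\<in>{..<d}. f k (x k)) = h (x i) * h (x j)" for x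
      using that True by (simp add: f_def prod.delta power2_eq_square)
    have fi: "integrable P (f k)" for k using hi2 by (cases "k = i") (simp_all add: f_def)
    have fk: "integral\<^sup>L P (f k) = (if k = i then (\<integral>x. (h x)\<^sup>2 \<partial>P) else 1)" for k
      by (cases "k = i") (simp_all add: f_def P.prob_space)
    have "(\<Prod>k\<in>{..<d}. integral\<^sup>L P (f k)) = (\<integral>x. (h x)\<^sup>2 \<partial>P)"
      using that by (simp add: fk prod.delta)
    then show ?thesis using product_integrable_prod[of "{..<d}" f] product_integral_prod[of "{..<d}" f] fi e True
      by simp
  next
    case False
    define f where "f k = (\<lambda>x. if k = i \<or> k = j then h x else (1::real))" for k
    have e: "(\<Prod>k\<in>{..<d}. f k (x k)) = h (x i) * h (x j)" for x
    proof -
      have "{..<d} \<inter> {k. k = i \<or> k = j} = {i,j}" using that by auto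
      then show ?thesis using False by (simp add: f_def prod.If_cases)
    qed
    have fi: "integrable P (f k)" for k using hi by (cases "k = i \<or> k = j") (simp_all add: f_def)
    have "(\<Prod>k\<in>{..<d}. integral\<^sup>L P (f k)) = (\<integral>x. h x \<partial>P)\<^sup>2"
    proof -
      have "{..<d} \<inter> {k. k = i \<or> k = j} = {i,j}" using that by auto
      have fk: "integral\<^sup>L P (f k) = (if k = i \<or> k = j then (\<integral>x. h x \<partial>P) else 1)" for k
        by (cases "k = i \<or> k = j") (simp_all add: f_def P.prob_space)
      show ?thesis unfolding fk prod.If_cases[OF finite_lessThan] using False \<open>_ = {i,j}\<close> by (simp add: power2_eq_square)
    qed
    then show ?thesis using product_integrable_prod[of "{..<d}" f] product_integral_prod[of "{..<d}" f] fi e False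
      by simp
  qed
  have sq: "(\<Sum>i<d. h (x i))\<^sup>2 = (\<Sum>i<d. \<Sum>j<d. h (x i) * h (x j))" for x
    by (simp add: power2_eq_square sum_product)
  have int: "integrable ?M (\<lambda>x. (\<Sum>i<d. h (x i))\<^sup>2)"
    unfolding sq by (auto intro!: integrable_sum pair[THEN conjunct1])
  have "(\<integral>x. (\<Sum>i<d. h (x i))\<^sup>2 \<partial>?M) = (\<Sum>i<d. \<Sum>j<d. (\<integral>x. h (x i) * h (x j) \<partial>?M))"
  proof -
    have "(\<integral>x. (\<Sum>i<d. h (x i))\<^sup>2 \<partial>?M) = (\<integral>x. (\<Sum>i<d. \<Sum>j<d. h (x i) * h (x j)) \<partial>?M)"
      by (simp only: sq)
    also have "(\<integral>x. (\<Sum>i<d. \<Sum>j<d. h (x i) * h (x j)) \<partial>?M) = (\<Sum>i<d. \<integral>x. (\<Sum>j<d. h (x i) * h (x j)) \<partial>?M)"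
      by (rule Bochner_Integration.integral_sum[where I="{..<d}" and f="\<lambda>i x. \<Sum>j<d. h (x i) * h (x j)"])
        (auto intro!: integrable_sum pair[THEN conjunct1])
    also have "\<dots> = (\<Sum>i<d. \<Sum>j<d. (\<integral>x. h (x i) * h (x j) \<partial>?M))"
      by (intro sum.cong refl Bochner_Integration.integral_sum[where I="{..<d}"])
        (auto intro!: pair[THEN conjunct1])
    finally show ?thesis .
  qed

  also have "\<dots> = (\<Sum>i<d. \<Sum>j<d. (if i = j then (\<integral>x. (h x)\<^sup>2 \<partial>P) else (\<integral>x. h x \<partial>P)\<^sup>2))"
    using pair by (intro sum.cong refl) auto
  also have "\<dots> = real d * (\<integral>x. (h x)\<^sup>2 \<partial>P) + (real d ^ 2 - real d) * (\<integral>x. h x \<partial>P)\<^sup>2"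
  proof -
    have "(\<Sum>j<d. (if i = j then (\<integral>x. (h x)\<^sup>2 \<partial>P) else (\<integral>x. h x \<partial>P)\<^sup>2))
        = (\<integral>x. (h x)\<^sup>2 \<partial>P) + (real d - 1) * (\<integral>x. h x \<partial>P)\<^sup>2" if "i < d" for i
    proof -
      have "(\<Sum>j<d. (if i = j then (\<integral>x. (h x)\<^sup>2 \<partial>P) else (\<integral>x. h x \<partial>P)\<^sup>2))
        = (\<Sum>j<d. (if i = j then (\<integral>x. (h x)\<^sup>2 \<partial>P) - (\<integral>x. h x \<partial>P)\<^sup>2 else 0) + (\<integral>x. h x \<partial>P)\<^sup>2)"
        by (intro sum.cong) auto
      also have "\<dots> = (\<integral>x. (h x)\<^sup>2 \<partial>P) - (\<integral>x. h x \<partial>P)\<^sup>2 + real d * (\<integral>x. h x \<partial>P)\<^sup>2"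
        using that by (simp add: sum.distrib)
      finally show ?thesis by (simp add: algebra_simps)
    qed
    then have "(\<Sum>i<d. \<Sum>j<d. (if i = j then (\<integral>x. (h x)\<^sup>2 \<partial>P) else (\<integral>x. h x \<partial>P)\<^sup>2))
       = (\<Sum>i<d. (\<integral>x. (h x)\<^sup>2 \<partial>P) + (real d - 1) * (\<integral>x. h x \<partial>P)\<^sup>2)"
      by (intro sum.cong) auto
    then show ?thesis by (simp add: power2_eq_square algebra_simps)
  qed
  finally have "(\<integral>x. (\<Sum>i<d. h (x i))\<^sup>2 \<partial>?M) = real d * (\<integral>x. (h x)\<^sup>2 \<partial>P) + (real d ^ 2 - real d) * (\<integral>x. h x \<partial>P)\<^sup>2" .
  moreover have "(\<integral>\<^sup>+ x. ennreal ((\<Sum>i<d. h (x i))\<^sup>2) \<partial>?M) = ennreal (\<integral>x. (\<Sum>i<d. h (x i))\<^sup>2 \<partial>?M)"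
    using int by (intro nn_integral_eq_integral) auto
  ultimately show ?thesis by simp
qed




lemma dyadic_point:
  fixes x t :: real
  assumes t: "t > 0" and p: "p \<ge> 0"
  shows "ennreal (\<bar>x\<bar> powr p * indicator {x. \<bar>x\<bar> > t} x)
     \<le> (\<Sum>k. ennreal ((2^(k+1)*t) powr p) * indicator {x. \<bar>x\<bar> > 2^k*t} x)"
proof (cases "\<bar>x\<bar> > t")
  case False then show ?thesis by simp
next
  case True
  obtain n where n: "\<bar>x\<bar> / t < 2^n" using real_arch_pow[of 2 "\<bar>x\<bar>/t"] by auto
  have ex: "\<exists>m. \<bar>x\<bar> \<le> 2^(m+1)*t"
  proof
    have "\<bar>x\<bar> < 2^n * t" using n t by (simp add: field_simps)
    also have "\<dots> \<le> 2^(n+1)*t" using t by simp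
    finally show "\<bar>x\<bar> \<le> 2^(n+1)*t" by simp
  qed
  define K where "K = (LEAST m. \<bar>x\<bar> \<le> 2^(m+1)*t)"
  have K1: "\<bar>x\<bar> \<le> 2^(K+1)*t" unfolding K_def using LeastI_ex[OF ex] .
  have K2: "\<bar>x\<bar> > 2^K*t"
  proof (cases K)
    case 0 then show ?thesis using True by simp
  next
    case (Suc m)
    then have "m < K" by simp
    then have "\<not> \<bar>x\<bar> \<le> 2^(m+1)*t" unfolding K_def by (rule not_less_Least)
    then show ?thesis using Suc by simp
  qed
  have "ennreal (\<bar>x\<bar> powr p * indicator {x. \<bar>x\<bar> > t} x) = ennreal (\<bar>x\<bar> powr p)"
    using True by simp
  also have "\<dots> \<le> ennreal ((2^(K+1)*t) powr p)"
    using K1 p True t by (intro ennreal_leI powr_mono2) auto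
  also have "\<dots> = ennreal ((2^(K+1)*t) powr p) * indicator {x. \<bar>x\<bar> > 2^K*t} x"
    using K2 by simp
  also have "\<dots> = (\<Sum>k\<in>{K}. ennreal ((2^(k+1)*t) powr p) * indicator {x. \<bar>x\<bar> > 2^k*t} x)"
    by (simp only: sum.insert finite.emptyI empty_iff sum.empty add_0_right not_False_eq_True)
  also have "\<dots> \<le> (\<Sum>k. ennreal ((2^(k+1)*t) powr p) * indicator {x. \<bar>x\<bar> > 2^k*t} x)"
    by (intro sum_le_suminf) auto
  finally show ?thesis .
qed

lemma noise_classD:
  assumes "P \<in> noise_class a \<tau>"
  shows "prob_space P" "sets P = sets borel" "space P = UNIV"
    "integrable P (\<lambda>x. x)" "(\<integral>x. x \<partial>P) = 0"
    "integrable P (\<lambda>x. x\<^sup>2)" "(\<integral>x. x\<^sup>2 \<partial>P) = 1"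
    "\<And>t. t \<ge> 2 \<Longrightarrow> measure P {x. \<bar>x\<bar> > t} \<le> (\<tau> / t) powr a"
  using assms sets_eq_imp_space_eq[of P borel] by (auto simp: noise_class_def)

lemma powr_alg:
  fixes t \<tau> p a :: real
  assumes "t > 0" "\<tau> > 0"
  shows "(2^(k+1)*t) powr p * (\<tau> / (2^k*t)) powr a
       = 2 powr p * \<tau> powr a * t powr (p - a) * (2 powr (p - a))^k"
proof -
  have e1: "(2::real)^k = 2 powr real k" by (simp add: powr_realpow)
  have "(2^(k+1)*t) powr p = 2 powr p * (2 powr (real k * p)) * t powr p"
    using assms by (simp add: powr_mult e1 powr_powr mult.commute)
  moreover have "(\<tau> / (2^k*t)) powr a = \<tau> powr a / (2 powr (real k * a) * t powr a)"
    using assms by (simp add: powr_divide powr_mult e1 powr_powr mult.commute)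
  moreover have "(2 powr (p - a))^k = 2 powr (real k * p) / 2 powr (real k * a)"
  proof -
    have "(2 powr (p - a))^k = 2 powr (real k * (p - a))" by (rule powr_power) simp
    then show ?thesis by (simp add: algebra_simps powr_diff)
  qed
  moreover have "t powr (p - a) = t powr p / t powr a" by (simp add: powr_diff)
  ultimately have "(2^(k+1)*t) powr p * (\<tau> / (2^k*t)) powr a =
     (2 powr p * (2 powr (real k * p)) * t powr p) * (\<tau> powr a / (2 powr (real k * a) * t powr a))"
    and "2 powr p * \<tau> powr a * t powr (p - a) * (2 powr (p - a))^k =
     2 powr p * \<tau> powr a * (t powr p / t powr a) * (2 powr (real k * p) / 2 powr (real k * a))"
    by simp_all
  moreover have "(2 powr p * (2 powr (real k * p)) * t powr p) * (\<tau> powr a / (2 powr (real k * a) * t powr a))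
     = 2 powr p * \<tau> powr a * (t powr p / t powr a) * (2 powr (real k * p) / 2 powr (real k * a))"
    by (simp add: field_simps)
  ultimately show ?thesis by simp
qed

lemma tail_bound:
  assumes P: "P \<in> noise_class a \<tau>" and tau: "\<tau> > 0" and "0 \<le> p" "p < a" "t \<ge> 2"
  shows "(\<integral>\<^sup>+x. ennreal (\<bar>x\<bar> powr p * indicator {x. \<bar>x\<bar> > t} x) \<partial>P)
     \<le> ennreal (2 powr p * \<tau> powr a * t powr (p - a) / (1 - 2 powr (p - a)))"
proof -
  note D = noise_classD[OF P]
  interpret prob_space P by (rule D(1))
  have meas: "{x. \<bar>x\<bar> > c} \<in> sets P" for c :: real
    using D(2) by simp
  define c where "c = 2 powr p * \<tau> powr a * t powr (p - a)"
  define r :: real where "r = 2 powr (p - a)"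
  have r: "0 < r" "r < 1" using assms by (auto simp: r_def intro!: powr_less_one)
  have c: "c \<ge> 0" by (simp add: c_def)
  have "(\<integral>\<^sup>+x. ennreal (\<bar>x\<bar> powr p * indicator {x. \<bar>x\<bar> > t} x) \<partial>P)
      \<le> (\<integral>\<^sup>+x. (\<Sum>k. ennreal ((2^(k+1)*t) powr p) * indicator {x. \<bar>x\<bar> > 2^k*t} x) \<partial>P)"
    using assms by (intro nn_integral_mono dyadic_point) auto
  also have "\<dots> = (\<Sum>k. \<integral>\<^sup>+x. ennreal ((2^(k+1)*t) powr p) * indicator {x. \<bar>x\<bar> > 2^k*t} x \<partial>P)"
    using D(2) by (intro nn_integral_suminf) simp
  also have "\<dots> = (\<Sum>k. ennreal ((2^(k+1)*t) powr p) * emeasure P {x. \<bar>x\<bar> > 2^k*t})"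
    using meas by (simp add: nn_integral_cmult_indicator)
  also have "\<dots> \<le> (\<Sum>k. ennreal (c * r^k))"
  proof (intro suminf_le[OF _ summableI summableI])
    fix k :: nat
    have tk: "2^k*t \<ge> 2"
    proof -
      have "(1::real) \<le> 2^k" by simp
      then have "1 * t \<le> 2^k * t" using assms(5) by (intro mult_right_mono) auto
      then show ?thesis using assms(5) by linarith
    qed
    have "emeasure P {x. \<bar>x\<bar> > 2^k*t} = ennreal (measure P {x. \<bar>x\<bar> > 2^k*t})"
      by (simp add: emeasure_eq_measure)
    also have "\<dots> \<le> ennreal ((\<tau> / (2^k*t)) powr a)"
      using D(8)[OF tk] by (rule ennreal_leI)
    finally have "ennreal ((2^(k+1)*t) powr p) * emeasure P {x. \<bar>x\<bar> > 2^k*t}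
        \<le> ennreal ((2^(k+1)*t) powr p) * ennreal ((\<tau> / (2^k*t)) powr a)"
      by (rule mult_left_mono) simp
    also have "\<dots> = ennreal ((2^(k+1)*t) powr p * (\<tau> / (2^k*t)) powr a)"
      by (simp add: ennreal_mult)
    also have "\<dots> = ennreal (c * r^k)"
      by (subst powr_alg) (use assms in \<open>simp_all add: c_def r_def\<close>)
    finally show "ennreal ((2^(k+1)*t) powr p) * emeasure P {x. \<bar>x\<bar> > 2^k*t} \<le> ennreal (c * r^k)" .
  qed
  also have "\<dots> = ennreal (\<Sum>k. c * r^k)"
    using r c by (intro suminf_ennreal2) auto
  also have "(\<Sum>k. c * r^k) = c / (1 - r)"
    using r by (simp add: suminf_mult suminf_geometric)
  finally show ?thesis by (simp add: c_def r_def)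
qed




lemma sum_mset_nonneg_real:
  fixes N :: "real multiset"
  shows "\<forall>y\<in>#N. 0 \<le> y \<Longrightarrow> 0 \<le> sum_mset N"
  by (induction N) auto

lemma sorted_take_le:
  fixes L :: "real list"
  assumes "sorted L" "N \<subseteq># mset L" "k \<le> size N" "\<forall>x\<in>set L. 0 \<le> x"
  shows "sum_list (take k L) \<le> sum_mset N"
  using assms
proof (induction L arbitrary: k N)
  case Nil then show ?case by simp
next
  case (Cons x L)
  have Nnn: "\<forall>y\<in>#N. 0 \<le> y"
  proof
    fix y assume "y \<in># N"
    then have "y \<in># mset (x # L)" by (rule mset_subset_eqD[OF Cons.prems(2)])
    then have "y \<in> set (x # L)" by (simp only: set_mset_mset)
    then show "0 \<le> y" using Cons.prems(4) by blast
  qed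
  show ?case
  proof (cases k)
    case 0
    then show ?thesis using Nnn by (simp add: sum_mset_nonneg_real)
  next
    case (Suc k')
    have sL: "sorted L" and xle: "\<forall>y\<in>set L. x \<le> y" using Cons.prems(1) by auto
    show ?thesis
    proof (cases "x \<in># N")
      case True
      define N' where "N' = N - {#x#}"
      have N: "N = add_mset x N'" using True by (simp add: N'_def)
      have "N' \<subseteq># mset L" using Cons.prems(2) N by simp
      moreover have "k' \<le> size N'" using Cons.prems(3) N Suc by simp
      ultimately have "sum_list (take k' L) \<le> sum_mset N'"
        using Cons.IH[of N' k'] sL Cons.prems(4) by auto
      then show ?thesis using Suc N by simp
    next
      case False
      have NL: "N \<subseteq># mset L"
      proof (rule mset_subset_eqI)
        fix y
        have "count N y \<le> count (mset (x # L)) y" using Cons.prems(2) by (rule mset_subset_eq_count)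
        then show "count N y \<le> count (mset L) y" using False
          by (cases "y = x") (auto simp: not_in_iff)
      qed
      have "N \<noteq> {#}" using Cons.prems(3) Suc by auto
      then obtain y where y: "y \<in># N" by (metis multiset_nonemptyE)
      define N' where "N' = N - {#y#}"
      have N: "N = add_mset y N'" using y by (simp add: N'_def)
      have "N' \<subseteq># mset L" using NL unfolding N'_def by (metis diff_subset_eq_self subset_mset.order_trans)
      moreover have "k' \<le> size N'" using Cons.prems(3) N Suc by simp
      ultimately have "sum_list (take k' L) \<le> sum_mset N'"
        using Cons.IH[of N' k'] sL Cons.prems(4) by auto
      moreover have "x \<le> y" using xle y NL by (auto dest: mset_subset_eqD)
      ultimately show ?thesis using Suc N by simp
    qed
  qed
qed

lemma sum_take_lower:
  fixes L :: "real list"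
  shows "sum_list (take k L) \<ge> sum_list (map (\<lambda>x. min x c) L) - real (length L - k) * c"
proof -
  have "sum_list (map (\<lambda>x. min x c) L) = sum_list (map (\<lambda>x. min x c) (take k L)) + sum_list (map (\<lambda>x. min x c) (drop k L))"
    by (metis append_take_drop_id map_append sum_list_append)
  moreover have "sum_list (map (\<lambda>x. min x c) (take k L)) \<le> sum_list (take k L)"
  proof -
    have "sum_list (map (\<lambda>x. min x c) xs) \<le> sum_list xs" for xs :: "real list"
      by (induction xs) auto
    then show ?thesis .
  qed
  moreover have "sum_list (map (\<lambda>x. min x c) (drop k L)) \<le> real (length L - k) * c"
  proof -
    have "sum_list (map (\<lambda>x. min x c) (drop k L)) \<le> sum_list (map (\<lambda>x. c) (drop k L))"
      by (intro sum_list_mono) auto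
    then show ?thesis by (simp add: sum_list_triv)
  qed
  ultimately show ?thesis by linarith
qed




lemma sq_ineq:
  fixes w g b :: real
  shows "(\<bar>w\<bar> + g + b)^2 \<le> 2*w^2 + 4*g^2 + 4*b^2"
proof -
  have "0 \<le> (\<bar>w\<bar> - g - b)^2 + 2*(g - b)^2" by simp
  moreover have "\<bar>w\<bar>^2 = w^2" by simp
  ultimately show ?thesis by (simp add: power2_eq_square algebra_simps)
qed

lemma sum_list_map_sort:
  fixes g :: "real \<Rightarrow> real"
  shows "sum_list (map g (sort xs)) = sum_list (map g xs)"
proof -
  have "sum_list (map g (sort xs)) = sum_mset (mset (map g (sort xs)))" by (rule sum_mset_sum_list[symmetric])
  also have "\<dots> = sum_mset (mset (map g xs))" by simp
  also have "\<dots> = sum_list (map g xs)" by (rule sum_mset_sum_list)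
  finally show ?thesis .
qed

lemma pointwise:
  fixes \<xi> \<theta> :: "nat \<Rightarrow> real" and t \<sigma> :: real
  assumes sig: "\<sigma> > 0" and th: "\<theta> \<in> sparse_vecs d s" and sd: "s < d" and t: "t \<ge> 0"
  shows "(sigma_hat_sq d s (obs \<theta> \<sigma> \<xi>) - \<sigma>^2)^2 \<le>
     \<sigma>^4 * (2*(\<Sum>i<d. (\<xi> i)^2 - 1)^2 + 4*(\<Sum>i<d. max ((\<xi> i)^2 - t^2) 0)^2 + 4*(2*real s*t^2)^2) / (real d)^2"
proof -
  define S where "S = {i\<in>{..<d}. \<theta> i \<noteq> 0}"
  have cS: "card S \<le> s" using th by (simp add: sparse_vecs_def S_def)
  define f where "f i = (obs \<theta> \<sigma> \<xi> i)^2" for i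
  define L where "L = sort (map f [0..<d])"
  define T where "T = sum_list (take (d - s) L)"
  define W where "W = (\<Sum>i<d. (\<xi> i)^2 - 1)"
  define G where "G = (\<Sum>i<d. max ((\<xi> i)^2 - t^2) 0)"
  define S2 where "S2 = (\<Sum>i<d. (\<xi> i)^2)"
  have S2W: "S2 = W + real d" by (simp add: S2_def W_def sum_subtractf)
  have G0: "G \<ge> 0" unfolding G_def by (intro sum_nonneg) auto
  have hat: "sigma_hat_sq d s (obs \<theta> \<sigma> \<xi>) = T / real d"
    unfolding sigma_hat_sq_def T_def L_def f_def by simp
  have fout: "f i = \<sigma>^2 * (\<xi> i)^2" if "i \<notin> S" "i < d" for i
    using that by (simp add: f_def obs_def S_def power_mult_distrib)
  define xs where "xs = filter (\<lambda>i. i \<notin> S) [0..<d]"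
  have setxs: "set xs = {..<d} - S" by (auto simp: xs_def)
  have dxs: "distinct xs" by (simp add: xs_def)
  have "T \<le> sum_mset (mset (map f xs))"
    unfolding T_def
  proof (rule sorted_take_le)
    show "sorted L" by (simp add: L_def)
    show "mset (map f xs) \<subseteq># mset L"
    proof -
      have "mset xs \<subseteq># mset [0..<d]" unfolding xs_def by (simp only: mset_filter multiset_filter_subset)
      then have "image_mset f (mset xs) \<subseteq># image_mset f (mset [0..<d])" by (rule image_mset_subseteq_mono)
      then show ?thesis by (simp only: L_def mset_sort mset_map)
    qed
    have "card ({..<d} - S) \<ge> d - s"
      using cS by (metis card_Diff_subset card_lessThan diff_le_mono2 finite_subset S_def mem_Collect_eq subsetI finite_lessThan
          le_trans card_Diff_subset_Int inf.cobounded2 diff_le_mono2)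
    then show "d - s \<le> size (mset (map f xs))"
      using distinct_card[OF dxs] setxs by simp
    show "\<forall>x\<in>set L. 0 \<le> x" by (auto simp: L_def f_def)
  qed
  also have "\<dots> = sum f ({..<d} - S)"
    by (simp only: sum_mset_sum_list sum_list_distinct_conv_sum_set[OF dxs] setxs)
  also have "\<dots> = (\<Sum>i\<in>{..<d} - S. \<sigma>^2 * (\<xi> i)^2)"
    using fout by (intro sum.cong) auto
  also have "\<dots> \<le> (\<Sum>i<d. \<sigma>^2 * (\<xi> i)^2)"
    by (intro sum_mono2) auto
  finally have Tup: "T \<le> \<sigma>^2 * S2" by (simp add: S2_def sum_distrib_left)
  define c where "c = \<sigma>^2 * t^2"
  have c0: "c \<ge> 0" by (simp add: c_def)
  have "T \<ge> sum_list (map (\<lambda>x. min x c) L) - real (length L - (d - s)) * c"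
    unfolding T_def by (rule sum_take_lower)
  moreover have "length L - (d - s) = s" using sd by (simp add: L_def)
  moreover have "sum_list (map (\<lambda>x. min x c) L) = (\<Sum>i<d. min (f i) c)"
    by (simp add: L_def sum_list_map_sort sum_set_upt_conv_sum_list_nat[symmetric] atLeast0LessThan)
  ultimately have T1: "T \<ge> (\<Sum>i<d. min (f i) c) - real s * c" by simp
  have trm: "min (f i) c \<ge> \<sigma>^2 * ((\<xi> i)^2 - max ((\<xi> i)^2 - t^2) 0) - (if i \<in> S then c else 0)"
    if "i < d" for i
  proof -
    have m: "min (\<sigma>^2 * (\<xi> i)^2) c = \<sigma>^2 * ((\<xi> i)^2 - max ((\<xi> i)^2 - t^2) 0)"
      using sig by (auto simp: c_def min_def max_def)
    show ?thesis
    proof (cases "i \<in> S")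
      case True
      have "min (\<sigma>^2 * (\<xi> i)^2) c \<le> c" by simp
      moreover have "min (f i) c \<ge> 0" using c0 by (simp add: f_def)
      ultimately show ?thesis using True m by simp
    next
      case False then show ?thesis using fout[OF False that] m by simp
    qed
  qed
  have "(\<Sum>i<d. min (f i) c) \<ge> (\<Sum>i<d. \<sigma>^2 * ((\<xi> i)^2 - max ((\<xi> i)^2 - t^2) 0) - (if i \<in> S then c else 0))"
    using trm by (intro sum_mono) auto
  also have "(\<Sum>i<d. \<sigma>^2 * ((\<xi> i)^2 - max ((\<xi> i)^2 - t^2) 0) - (if i \<in> S then c else 0))
      = \<sigma>^2 * (S2 - G) - real (card S) * c"
  proof -
    have "(\<Sum>i<d. (if i \<in> S then c else 0)) = real (card S) * c"
    proof -
      have "{..<d} \<inter> S = S" by (auto simp: S_def)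
      then show ?thesis by (simp add: sum.If_cases)
    qed
    then show ?thesis by (simp add: sum_subtractf sum_distrib_left S2_def G_def right_diff_distrib)
  qed
  finally have "T \<ge> \<sigma>^2 * (S2 - G) - real (card S) * c - real s * c" using T1 by linarith
  moreover have "real (card S) * c \<le> real s * c" using cS c0 by (intro mult_right_mono) auto
  ultimately have Tlo: "T \<ge> \<sigma>^2 * (S2 - G - 2 * real s * t^2)" by (simp add: c_def algebra_simps)
  have dpos: "real d > 0" using sd by simp
  define u where "u = T - real d * \<sigma>^2"
  have "\<bar>u\<bar> \<le> \<sigma>^2 * (\<bar>W\<bar> + G + 2 * real s * t^2)"
  proof -
    have "u \<le> \<sigma>^2 * W" using Tup S2W by (simp add: u_def algebra_simps)
    moreover have "u \<ge> \<sigma>^2 * (W - G - 2 * real s * t^2)" using Tlo S2W by (simp add: u_def algebra_simps)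
    moreover have "\<sigma>^2 * W \<le> \<sigma>^2 * (\<bar>W\<bar> + G + 2 * real s * t^2)"
    proof -
      have "0 \<le> 2 * real s * t^2" by simp
      then have "W \<le> \<bar>W\<bar> + G + 2 * real s * t^2" using G0 by linarith
      then show ?thesis by (intro mult_left_mono) auto
    qed
    moreover have "- (\<sigma>^2 * (W - G - 2 * real s * t^2)) \<le> \<sigma>^2 * (\<bar>W\<bar> + G + 2 * real s * t^2)"
    proof -
      have "0 \<le> 2 * real s * t^2" by simp
      then have h: "-(W - G - 2 * real s * t^2) \<le> \<bar>W\<bar> + G + 2 * real s * t^2" using G0 by linarith
      have "\<sigma>^2 * (-(W - G - 2 * real s * t^2)) \<le> \<sigma>^2 * (\<bar>W\<bar> + G + 2 * real s * t^2)"
        by (rule mult_left_mono[OF h]) simp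
      then show ?thesis by (simp only: mult_minus_right)
    qed
    ultimately show ?thesis by linarith
  qed
  then have "u^2 \<le> (\<sigma>^2 * (\<bar>W\<bar> + G + 2 * real s * t^2))^2"
    by (metis abs_ge_zero power2_abs power_mono)
  also have "\<dots> = \<sigma>^4 * (\<bar>W\<bar> + G + 2 * real s * t^2)^2" by (simp add: power_mult_distrib)
  also have "\<dots> \<le> \<sigma>^4 * (2*W^2 + 4*G^2 + 4*(2*real s*t^2)^2)"
    by (intro mult_left_mono sq_ineq) auto
  finally have u2: "u^2 \<le> \<sigma>^4 * (2*W^2 + 4*G^2 + 4*(2*real s*t^2)^2)" .
  have "(sigma_hat_sq d s (obs \<theta> \<sigma> \<xi>) - \<sigma>^2)^2 = u^2 / (real d)^2"
    using dpos by (simp add: hat u_def field_simps)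
  with u2 dpos show ?thesis by (simp add: W_def G_def divide_right_mono)
qed




lemma nn_bound_integrable:
  fixes f :: "'a \<Rightarrow> real"
  assumes "f \<in> borel_measurable M" "\<And>x. 0 \<le> f x" "(\<integral>\<^sup>+x. ennreal (f x) \<partial>M) \<le> ennreal B" "0 \<le> B"
  shows "integrable M f" "integral\<^sup>L M f \<le> B"
proof -
  have "(\<integral>\<^sup>+x. ennreal (f x) \<partial>M) < \<infinity>" using assms(3) by (simp add: le_less_trans)
  then show i: "integrable M f" using assms by (intro integrableI_nonneg) auto
  have "ennreal (integral\<^sup>L M f) \<le> ennreal B"
    using nn_integral_eq_integral[OF i] assms by auto
  then show "integral\<^sup>L M f \<le> B" using assms(4) by (simp add: ennreal_le_iff)
qed

lemma moments:
  assumes P: "P \<in> noise_class a \<tau>" and tau: "\<tau> > 0" and a: "a > 4" and t: "t \<ge> 2"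
  defines "K \<equiv> (\<lambda>p::real. 2 powr p * \<tau> powr a / (1 - 2 powr (p - a)))"
  shows "integrable P (\<lambda>x. x^4)" "(\<integral>x. x^4 \<partial>P) \<le> 16 + K 4 * 2 powr (4 - a)"
    "integrable P (\<lambda>x. max (x\<^sup>2 - t\<^sup>2) 0)" "integrable P (\<lambda>x. (max (x\<^sup>2 - t\<^sup>2) 0)\<^sup>2)"
    "(\<integral>x. max (x\<^sup>2 - t\<^sup>2) 0 \<partial>P) \<le> K 2 * t powr (2 - a)"
    "(\<integral>x. (max (x\<^sup>2 - t\<^sup>2) 0)\<^sup>2 \<partial>P) \<le> K 4 * t powr (4 - a)"
proof -
  note D = noise_classD[OF P]
  interpret prob_space P by (rule D(1))
  have bm: "borel_measurable P = borel_measurable borel" by (rule measurable_cong_sets[OF D(2) refl])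
  have Kpos: "K p \<ge> 0" if "p < a" for p
  proof -
    have "2 powr (p - a) < 1" using that by (intro powr_less_one) auto
    then show ?thesis by (simp add: K_def)
  qed
  have tb: "(\<integral>\<^sup>+x. ennreal (\<bar>x\<bar> powr p * indicator {x. \<bar>x\<bar> > s} x) \<partial>P) \<le> ennreal (K p * s powr (p - a))"
    if "0 \<le> p" "p < a" "s \<ge> 2" for p s
    using tail_bound[OF P tau that] by (simp add: K_def mult.commute mult.left_commute)
  have "(\<integral>\<^sup>+x. ennreal (x^4) \<partial>P) \<le> (\<integral>\<^sup>+x. ennreal 16 + ennreal (\<bar>x\<bar> powr 4 * indicator {x. \<bar>x\<bar> > 2} x) \<partial>P)"
  proof (intro nn_integral_mono)
    fix x :: real
    show "ennreal (x^4) \<le> ennreal 16 + ennreal (\<bar>x\<bar> powr 4 * indicator {x. \<bar>x\<bar> > 2} x)"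
    proof (cases "\<bar>x\<bar> > 2")
      case True
      then show ?thesis by simp
    next
      case False
      then have "\<bar>x\<bar>^4 \<le> 2^4" by (intro power_mono) auto
      then have "x^4 \<le> 16" by simp
      then have "ennreal (x^4) \<le> ennreal 16" by (rule ennreal_leI)
      then show ?thesis using False by simp
    qed
  qed
  also have "\<dots> = ennreal 16 + (\<integral>\<^sup>+x. ennreal (\<bar>x\<bar> powr 4 * indicator {x. \<bar>x\<bar> > 2} x) \<partial>P)"
    by (subst nn_integral_add) (auto simp: bm emeasure_space_1)
  also have "\<dots> \<le> ennreal 16 + ennreal (K 4 * 2 powr (4 - a))"
    using tb[of 4 2] a by (intro add_left_mono) auto
  also have "\<dots> = ennreal (16 + K 4 * 2 powr (4 - a))"
    using Kpos[of 4] a by (simp add: ennreal_plus)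
  finally have m4: "(\<integral>\<^sup>+x. ennreal (x^4) \<partial>P) \<le> ennreal (16 + K 4 * 2 powr (4 - a))" .
  have K4: "0 \<le> 16 + K 4 * 2 powr (4 - a)" using Kpos[of 4] a by simp
  show "integrable P (\<lambda>x. x^4)" "(\<integral>x. x^4 \<partial>P) \<le> 16 + K 4 * 2 powr (4 - a)"
    using nn_bound_integrable[OF _ _ m4 K4] by (auto simp: bm)
  have g1: "(\<integral>\<^sup>+x. ennreal (max (x\<^sup>2 - t\<^sup>2) 0) \<partial>P) \<le> ennreal (K 2 * t powr (2 - a))"
  proof -
    have "(\<integral>\<^sup>+x. ennreal (max (x\<^sup>2 - t\<^sup>2) 0) \<partial>P) \<le> (\<integral>\<^sup>+x. ennreal (\<bar>x\<bar> powr 2 * indicator {x. \<bar>x\<bar> > t} x) \<partial>P)"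
    proof (intro nn_integral_mono ennreal_leI)
      fix x :: real
      show "max (x\<^sup>2 - t\<^sup>2) 0 \<le> \<bar>x\<bar> powr 2 * indicator {x. \<bar>x\<bar> > t} x"
      proof (cases "\<bar>x\<bar> > t")
        case True then show ?thesis using t by simp
      next
        case False
        then have "\<bar>x\<bar>^2 \<le> t^2" using t by (intro power_mono) auto
        then show ?thesis using False by simp
      qed
    qed
    also have "\<dots> \<le> ennreal (K 2 * t powr (2 - a))" using tb[of 2 t] a t by simp
    finally show ?thesis .
  qed
  have g2: "(\<integral>\<^sup>+x. ennreal ((max (x\<^sup>2 - t\<^sup>2) 0)\<^sup>2) \<partial>P) \<le> ennreal (K 4 * t powr (4 - a))"
  proof -
    have "(\<integral>\<^sup>+x. ennreal ((max (x\<^sup>2 - t\<^sup>2) 0)\<^sup>2) \<partial>P) \<le> (\<integral>\<^sup>+x. ennreal (\<bar>x\<bar> powr 4 * indicator {x. \<bar>x\<bar> > t} x) \<partial>P)"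
    proof (intro nn_integral_mono ennreal_leI)
      fix x :: real
      show "(max (x\<^sup>2 - t\<^sup>2) 0)\<^sup>2 \<le> \<bar>x\<bar> powr 4 * indicator {x. \<bar>x\<bar> > t} x"
      proof (cases "\<bar>x\<bar> > t")
        case True
        have "(max (x\<^sup>2 - t\<^sup>2) 0)\<^sup>2 \<le> (x\<^sup>2)\<^sup>2" using t by (intro power_mono) auto
        moreover have "(x\<^sup>2)\<^sup>2 = x^4" by simp
        ultimately show ?thesis using True t by simp
      next
        case False
        then have "\<bar>x\<bar>^2 \<le> t^2" using t by (intro power_mono) auto
        then show ?thesis using False by simp
      qed
    qed
    also have "\<dots> \<le> ennreal (K 4 * t powr (4 - a))" using tb[of 4 t] a t by simp
    finally show ?thesis .
  qed
  have "0 \<le> K 2 * t powr (2 - a)" "0 \<le> K 4 * t powr (4 - a)" using Kpos[of 2] Kpos[of 4] a by auto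
  then show "integrable P (\<lambda>x. max (x\<^sup>2 - t\<^sup>2) 0)" "integrable P (\<lambda>x. (max (x\<^sup>2 - t\<^sup>2) 0)\<^sup>2)"
    "(\<integral>x. max (x\<^sup>2 - t\<^sup>2) 0 \<partial>P) \<le> K 2 * t powr (2 - a)"
    "(\<integral>x. (max (x\<^sup>2 - t\<^sup>2) 0)\<^sup>2 \<partial>P) \<le> K 4 * t powr (4 - a)"
    using nn_bound_integrable[OF _ _ g1] nn_bound_integrable[OF _ _ g2] by (auto simp: bm)
qed




lemma rate_facts:
  fixes a s d :: real
  assumes a: "a > 4" and s: "s \<ge> 1" and sd: "2 * s < d"
  defines "\<rho> \<equiv> s / d"
  defines "t \<equiv> 2 * \<rho> powr (-1/a)"
  defines "b \<equiv> \<rho> powr (1 - 2/a)"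
  defines "B \<equiv> max (1 / sqrt d) b"
  shows "t \<ge> 2" "1 / d \<le> B\<^sup>2" "t powr (4 - a) / d \<le> 2 powr (4 - a) * B\<^sup>2"
    "t powr (2 - a) = 2 powr (2 - a) * b" "b\<^sup>2 \<le> B\<^sup>2" "(2 * s * t\<^sup>2)\<^sup>2 / d\<^sup>2 = 64 * b\<^sup>2" "b \<ge> 0"
proof -
  have d: "d > 0" using s sd by linarith
  have rho: "0 < \<rho>" "\<rho> \<le> 1" using s sd d by (auto simp: \<rho>_def field_simps)
  have rd: "1 / d \<le> \<rho>" using s d by (simp add: \<rho>_def divide_right_mono)
  have e1: "\<rho> powr (-1/a) \<ge> 1"
    using powr_mono2'[of "-1/a" \<rho> 1] rho a by simp
  then show "t \<ge> 2" by (simp add: t_def)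
  show b0: "b \<ge> 0" by (simp add: b_def)
  have B0: "0 \<le> 1 / sqrt d" using d by simp
  show "1 / d \<le> B\<^sup>2"
  proof -
    have "(1 / sqrt d)\<^sup>2 \<le> B\<^sup>2" using B0 by (intro power_mono) (auto simp: B_def)
    then show ?thesis using d by (simp add: power_divide)
  qed
  show bB: "b\<^sup>2 \<le> B\<^sup>2" using b0 by (intro power_mono) (auto simp: B_def)
  have tp: "t powr q = 2 powr q * \<rho> powr (- q / a)" for q
    using rho by (simp add: t_def powr_mult powr_powr)
  have b2: "b\<^sup>2 = \<rho> powr (2 - 4/a)"
    using rho by (simp add: b_def power2_eq_square powr_add[symmetric] diff_divide_distrib)
  show "t powr (2 - a) = 2 powr (2 - a) * b"
  proof -
    have "- (2 - a) / a = 1 - 2 / a" using a by (simp add: field_simps)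
    then show ?thesis by (simp add: tp b_def)
  qed
  show "t powr (4 - a) / d \<le> 2 powr (4 - a) * B\<^sup>2"
  proof -
    have "t powr (4 - a) / d = 2 powr (4 - a) * (\<rho> powr (- (4 - a) / a) * (1 / d))"
      by (simp add: tp)
    also have "\<dots> \<le> 2 powr (4 - a) * (\<rho> powr (- (4 - a) / a) * \<rho>)"
      using rd by (intro mult_left_mono) auto
    also have "\<rho> powr (- (4 - a) / a) * \<rho> = \<rho> powr (2 - 4/a)"
    proof -
      have "\<rho> powr (- (4 - a) / a) * \<rho> = \<rho> powr (- (4 - a) / a + 1)"
        using rho by (simp add: powr_add)
      moreover have "- (4 - a) / a + 1 = 2 - 4/a" using a by (simp add: field_simps)
      ultimately show ?thesis by simp
    qed
    also have "2 powr (4 - a) * \<rho> powr (2 - 4/a) \<le> 2 powr (4 - a) * B\<^sup>2"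
      using bB b2 by (intro mult_left_mono) auto
    finally show ?thesis .
  qed
  show "(2 * s * t\<^sup>2)\<^sup>2 / d\<^sup>2 = 64 * b\<^sup>2"
  proof -
    have t2: "t\<^sup>2 = 4 * \<rho> powr (-2/a)"
      using rho by (simp add: t_def power2_eq_square powr_add[symmetric])
    have "(2 * s * t\<^sup>2)\<^sup>2 / d\<^sup>2 = 4 * \<rho>\<^sup>2 * (t\<^sup>2)\<^sup>2"
      using d by (simp add: \<rho>_def power2_eq_square field_simps)
    also have "\<dots> = 64 * (\<rho>\<^sup>2 * (\<rho> powr (-2/a))\<^sup>2)"
      unfolding t2 by (simp add: power2_eq_square)
    also have "\<rho>\<^sup>2 * (\<rho> powr (-2/a))\<^sup>2 = \<rho> powr (2 - 4/a)"
    proof -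
      have e: "\<rho> powr (1 + 1 + (-2/a) + (-2/a)) = \<rho> powr 1 * \<rho> powr 1 * \<rho> powr (-2/a) * \<rho> powr (-2/a)"
        using rho by (simp only: powr_add)
      have "1 + 1 + (-2/a) + (-2/a) = 2 - 4/a" by simp
      with e rho show ?thesis by (simp add: power2_eq_square)
    qed
    finally show ?thesis using b2 by simp
  qed
qed




theorem theorem4:
  fixes a \<tau> :: real
  assumes "\<tau> > 0" and "a > 4"
  shows "\<exists>C>0. \<forall>d s::nat. 1 \<le> s \<and> real s < real d / 2 \<longrightarrow>
    (\<forall>P\<in>noise_class a \<tau>. \<forall>\<sigma>>0. \<forall>\<theta>\<in>sparse_vecs d s.
      (\<integral>\<^sup>+ \<xi>. ennreal ((sigma_hat_sq d s (obs \<theta> \<sigma> \<xi>) - \<sigma>\<^sup>2)\<^sup>2) \<partial>noise_law d P)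
        \<le> ennreal (C * \<sigma> ^ 4 * (max (1 / sqrt (real d)) ((real s / real d) powr (1 - 2 / a)))\<^sup>2))"
proof -
  note tau = assms(1) and a = assms(2)
  define K where "K = (\<lambda>p::real. 2 powr p * \<tau> powr a / (1 - 2 powr (p - a)))"
  have Kpos: "K p \<ge> 0" if "p < a" for p
  proof -
    have "2 powr (p - a) < 1" using that by (intro powr_less_one) auto
    then show ?thesis by (simp add: K_def)
  qed
  define M4 where "M4 = 16 + K 4 * 2 powr (4 - a)"
  have M4: "M4 \<ge> 16" using Kpos[of 4] a by (simp add: M4_def)
  define C where "C = 2 * (M4 + 1) + 4 * K 4 * 2 powr (4 - a) + 4 * (K 2)\<^sup>2 * (2 powr (2 - a))\<^sup>2 + 256"
  have Cpos: "C > 0" using M4 Kpos[of 4] a by (simp add: C_def add_pos_nonneg)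
  show ?thesis
  proof (intro exI[of _ C] conjI allI impI ballI Cpos)
    fix d s :: nat and P :: "real measure" and \<sigma> :: real and \<theta> :: "nat \<Rightarrow> real"
    assume ds: "1 \<le> s \<and> real s < real d / 2" and P: "P \<in> noise_class a \<tau>"
      and sig: "\<sigma> > 0" and th: "\<theta> \<in> sparse_vecs d s"
    have s1: "real s \<ge> 1" and sd2: "2 * real s < real d" using ds by auto
    have sd: "s < d" using ds by linarith
    have dpos: "real d > 0" using sd by simp
    define \<rho> where "\<rho> = real s / real d"
    define t where "t = 2 * \<rho> powr (-1/a)"
    define b where "b = \<rho> powr (1 - 2/a)"
    define B where "B = max (1 / sqrt (real d)) b"
    note R = rate_facts[OF a s1 sd2, folded \<rho>_def, folded t_def b_def, folded B_def]
    have t2: "t \<ge> 2" by (rule R(1))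
    note mom = moments[OF P tau a t2, folded K_def]
    note D = noise_classD[OF P]
    interpret P: prob_space P by (rule D(1))
    define M where "M = noise_law d P"
    interpret M: prob_space M unfolding M_def noise_law_def by (rule prob_space_PiM) (rule D(1))  
    have setsM: "sets M = sets (PiM {..<d} (\<lambda>_. borel))"
      unfolding M_def noise_law_def by (intro sets_PiM_cong) (simp_all add: D(2))
    have bmM: "borel_measurable M = borel_measurable (PiM {..<d} (\<lambda>_. borel))"
      by (rule measurable_cong_sets[OF setsM refl])
    have bmP: "borel_measurable P = borel_measurable borel" by (rule measurable_cong_sets[OF D(2) refl])
    define g where "g = (\<lambda>x::real. max (x\<^sup>2 - t\<^sup>2) 0)"
    define Wf where "Wf = (\<lambda>x::nat\<Rightarrow>real. \<Sum>i<d. (x i)\<^sup>2 - 1)"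
    define Gf where "Gf = (\<lambda>x::nat\<Rightarrow>real. \<Sum>i<d. g (x i))"
    have Wb: "(\<integral>\<^sup>+x. ennreal ((Wf x)\<^sup>2) \<partial>M) \<le> ennreal (real d * (M4 + 1))"
    proof -
      have i2: "integrable P (\<lambda>x. x\<^sup>2 - 1)" using D(6) by simp
      have i4: "integrable P (\<lambda>x. x^4 + 1)" using mom(1) by simp
      have pw: "(x\<^sup>2 - 1)\<^sup>2 \<le> x^4 + 1" for x :: real
      proof -
        have "(x\<^sup>2 - 1)\<^sup>2 = (x\<^sup>2)\<^sup>2 - 2 * x\<^sup>2 + 1" by (simp add: power2_diff)
        moreover have "(x\<^sup>2)\<^sup>2 = x^4" by simp
        moreover have "x\<^sup>2 \<ge> 0" by simp
        ultimately show ?thesis by linarith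
      qed
      have pwn: "norm ((x\<^sup>2 - 1)\<^sup>2) \<le> norm (x^4 + 1)" for x :: real
      proof -
        have "0 \<le> x^4" by simp
        then show ?thesis using pw[of x] by simp
      qed
      have h2: "integrable P (\<lambda>x. (x\<^sup>2 - 1)\<^sup>2)"
        by (rule Bochner_Integration.integrable_bound[OF i4]) (simp add: bmP, rule AE_I2, rule pwn)
      have "(\<integral>x. (x\<^sup>2 - 1)\<^sup>2 \<partial>P) \<le> (\<integral>x. x^4 + 1 \<partial>P)"
        by (intro integral_mono h2 i4) (rule pw)
      also have "\<dots> = (\<integral>x. x^4 \<partial>P) + 1" using mom(1) by (simp add: P.prob_space)
      finally have e2: "(\<integral>x. (x\<^sup>2 - 1)\<^sup>2 \<partial>P) \<le> M4 + 1" using mom(2) by (simp add: M4_def K_def)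
      have e1: "(\<integral>x. x\<^sup>2 - 1 \<partial>P) = 0" using D(6,7) by (simp add: P.prob_space)
      have "(\<integral>\<^sup>+x. ennreal ((Wf x)\<^sup>2) \<partial>M) = ennreal (real d * (\<integral>x. (x\<^sup>2 - 1)\<^sup>2 \<partial>P) + (real d ^ 2 - real d) * (\<integral>x. x\<^sup>2 - 1 \<partial>P)\<^sup>2)"
        unfolding M_def noise_law_def Wf_def
        by (rule sq_sum_PiM[OF D(1) _ i2 h2]) (simp add: bmP)
      also have "\<dots> \<le> ennreal (real d * (M4 + 1))"
        using e1 e2 by (intro ennreal_leI) (simp add: mult_left_mono)
      finally show ?thesis .
    qed
    have Gb: "(\<integral>\<^sup>+x. ennreal ((Gf x)\<^sup>2) \<partial>M) \<le> ennreal (real d * (K 4 * t powr (4 - a)) + (real d)\<^sup>2 * (K 2 * t powr (2 - a))\<^sup>2)"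
    proof -
      have g0: "0 \<le> (\<integral>x. g x \<partial>P)" by (simp add: g_def)
      have "(\<integral>\<^sup>+x. ennreal ((Gf x)\<^sup>2) \<partial>M) = ennreal (real d * (\<integral>x. (g x)\<^sup>2 \<partial>P) + (real d ^ 2 - real d) * (\<integral>x. g x \<partial>P)\<^sup>2)"
        unfolding M_def noise_law_def Gf_def
        by (rule sq_sum_PiM[OF D(1)]) (use mom(3,4) in \<open>simp_all add: bmP g_def\<close>)
      also have "\<dots> \<le> ennreal (real d * (K 4 * t powr (4 - a)) + (real d)\<^sup>2 * (K 2 * t powr (2 - a))\<^sup>2)"
      proof (intro ennreal_leI add_mono mult_left_mono)
        show "(\<integral>x. (g x)\<^sup>2 \<partial>P) \<le> K 4 * t powr (4 - a)" using mom(6) by (simp add: g_def K_def)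
        have "(\<integral>x. g x \<partial>P)\<^sup>2 \<le> (K 2 * t powr (2 - a))\<^sup>2"
          using mom(5) g0 by (intro power_mono) (simp_all add: g_def K_def)
        moreover have "(real d ^ 2 - real d) \<le> (real d)\<^sup>2" using dpos by simp
        ultimately show "(real d ^ 2 - real d) * (\<integral>x. g x \<partial>P)\<^sup>2 \<le> (real d)\<^sup>2 * (K 2 * t powr (2 - a))\<^sup>2"
          using dpos by (intro mult_mono) auto
      qed auto
      finally show ?thesis .
    qed
    define c1 where "c1 = 2 * \<sigma>^4 / (real d)\<^sup>2"
    define c2 where "c2 = 4 * \<sigma>^4 / (real d)\<^sup>2"
    define c3 where "c3 = \<sigma>^4 * (4 * (2 * real s * t\<^sup>2)\<^sup>2) / (real d)\<^sup>2"
    have c: "c1 \<ge> 0" "c2 \<ge> 0" "c3 \<ge> 0" by (simp_all add: c1_def c2_def c3_def)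
    have measW: "(\<lambda>x. ennreal ((Wf x)\<^sup>2)) \<in> borel_measurable M" unfolding bmM Wf_def by measurable
    have measG: "(\<lambda>x. ennreal ((Gf x)\<^sup>2)) \<in> borel_measurable M" unfolding bmM Gf_def g_def by measurable
    have "(\<integral>\<^sup>+ \<xi>. ennreal ((sigma_hat_sq d s (obs \<theta> \<sigma> \<xi>) - \<sigma>\<^sup>2)\<^sup>2) \<partial>M)
        \<le> (\<integral>\<^sup>+ \<xi>. ennreal c1 * ennreal ((Wf \<xi>)\<^sup>2) + ennreal c2 * ennreal ((Gf \<xi>)\<^sup>2) + ennreal c3 \<partial>M)"
    proof (intro nn_integral_mono)
      fix \<xi> :: "nat \<Rightarrow> real"
      have "(sigma_hat_sq d s (obs \<theta> \<sigma> \<xi>) - \<sigma>\<^sup>2)\<^sup>2 \<le> c1 * (Wf \<xi>)\<^sup>2 + c2 * (Gf \<xi>)\<^sup>2 + c3"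
      proof -
        have "(sigma_hat_sq d s (obs \<theta> \<sigma> \<xi>) - \<sigma>\<^sup>2)\<^sup>2 \<le> \<sigma>^4 * (2*(Wf \<xi>)\<^sup>2 + 4*(Gf \<xi>)\<^sup>2 + 4*(2*real s*t\<^sup>2)\<^sup>2) / (real d)\<^sup>2"
          using pointwise[OF sig th sd, where t=t and \<xi>=\<xi>] t2 by (simp add: Wf_def Gf_def g_def)
        also have "\<dots> = c1 * (Wf \<xi>)\<^sup>2 + c2 * (Gf \<xi>)\<^sup>2 + c3"
          using dpos by (simp add: c1_def c2_def c3_def field_simps)
        finally show ?thesis .
      qed
      then have "ennreal ((sigma_hat_sq d s (obs \<theta> \<sigma> \<xi>) - \<sigma>\<^sup>2)\<^sup>2) \<le> ennreal (c1 * (Wf \<xi>)\<^sup>2 + c2 * (Gf \<xi>)\<^sup>2 + c3)"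
        by (rule ennreal_leI)
      also have "\<dots> = ennreal c1 * ennreal ((Wf \<xi>)\<^sup>2) + ennreal c2 * ennreal ((Gf \<xi>)\<^sup>2) + ennreal c3"
        using c by (simp add: ennreal_plus ennreal_mult)
      finally show "ennreal ((sigma_hat_sq d s (obs \<theta> \<sigma> \<xi>) - \<sigma>\<^sup>2)\<^sup>2) \<le> \<dots>" .
    qed
    also have "\<dots> = ennreal c1 * (\<integral>\<^sup>+x. ennreal ((Wf x)\<^sup>2) \<partial>M) + ennreal c2 * (\<integral>\<^sup>+x. ennreal ((Gf x)\<^sup>2) \<partial>M) + ennreal c3"
      using measW measG by (simp add: nn_integral_add nn_integral_cmult M.emeasure_space_1)
    also have "\<dots> \<le> ennreal c1 * ennreal (real d * (M4 + 1)) + ennreal c2 * ennreal (real d * (K 4 * t powr (4 - a)) + (real d)\<^sup>2 * (K 2 * t powr (2 - a))\<^sup>2) + ennreal c3"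
      by (intro add_mono mult_left_mono Wb Gb order_refl) auto
    also have "\<dots> = ennreal (c1 * (real d * (M4 + 1)) + c2 * (real d * (K 4 * t powr (4 - a)) + (real d)\<^sup>2 * (K 2 * t powr (2 - a))\<^sup>2) + c3)"
      using c M4 Kpos[of 4] Kpos[of 2] a by (simp add: ennreal_plus ennreal_mult)
    also have "\<dots> \<le> ennreal (C * \<sigma> ^ 4 * B\<^sup>2)"
    proof (intro ennreal_leI)
      have s4: "\<sigma>^4 > 0" using sig by simp
      have T1: "c1 * (real d * (M4 + 1)) \<le> \<sigma>^4 * (2 * (M4 + 1) * B\<^sup>2)"
      proof -
        have "c1 * (real d * (M4 + 1)) = \<sigma>^4 * (2 * (M4 + 1) * (1 / real d))"
          using dpos by (simp add: c1_def power2_eq_square field_simps)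
        also have "\<dots> \<le> \<sigma>^4 * (2 * (M4 + 1) * B\<^sup>2)"
          using R(2) M4 s4 by (intro mult_left_mono) auto
        finally show ?thesis .
      qed
      have T2: "c2 * (real d * (K 4 * t powr (4 - a))) \<le> \<sigma>^4 * (4 * K 4 * 2 powr (4 - a) * B\<^sup>2)"
      proof -
        have "c2 * (real d * (K 4 * t powr (4 - a))) = \<sigma>^4 * (4 * K 4 * (t powr (4 - a) / real d))"
          using dpos by (simp add: c2_def power2_eq_square field_simps)
        also have "\<dots> \<le> \<sigma>^4 * (4 * K 4 * (2 powr (4 - a) * B\<^sup>2))"
          using R(3) Kpos[of 4] a s4 by (intro mult_left_mono) auto
        finally show ?thesis by (simp add: mult.assoc)
      qed
      have T3: "c2 * ((real d)\<^sup>2 * (K 2 * t powr (2 - a))\<^sup>2) \<le> \<sigma>^4 * (4 * (K 2)\<^sup>2 * (2 powr (2 - a))\<^sup>2 * B\<^sup>2)"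
      proof -
        have "c2 * ((real d)\<^sup>2 * (K 2 * t powr (2 - a))\<^sup>2) = \<sigma>^4 * (4 * (K 2)\<^sup>2 * (2 powr (2 - a))\<^sup>2 * b\<^sup>2)"
          using dpos by (simp add: c2_def R(4) power_mult_distrib)
        also have "\<dots> \<le> \<sigma>^4 * (4 * (K 2)\<^sup>2 * (2 powr (2 - a))\<^sup>2 * B\<^sup>2)"
          using R(5) s4 by (intro mult_left_mono) auto
        finally show ?thesis .
      qed
      have T4: "c3 \<le> \<sigma>^4 * (256 * B\<^sup>2)"
      proof -
        have "c3 = \<sigma>^4 * (4 * ((2 * real s * t\<^sup>2)\<^sup>2 / (real d)\<^sup>2))" by (simp add: c3_def)
        also have "\<dots> = \<sigma>^4 * (256 * b\<^sup>2)" by (simp add: R(6))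
        also have "\<dots> \<le> \<sigma>^4 * (256 * B\<^sup>2)" using R(5) s4 by (intro mult_left_mono) auto
        finally show ?thesis .
      qed
      have "C * \<sigma> ^ 4 * B\<^sup>2 = \<sigma>^4 * (2 * (M4 + 1) * B\<^sup>2) + \<sigma>^4 * (4 * K 4 * 2 powr (4 - a) * B\<^sup>2)
          + \<sigma>^4 * (4 * (K 2)\<^sup>2 * (2 powr (2 - a))\<^sup>2 * B\<^sup>2) + \<sigma>^4 * (256 * B\<^sup>2)"
        by (simp add: C_def algebra_simps)
      then show "c1 * (real d * (M4 + 1)) + c2 * (real d * (K 4 * t powr (4 - a)) + (real d)\<^sup>2 * (K 2 * t powr (2 - a))\<^sup>2) + c3
          \<le> C * \<sigma> ^ 4 * B\<^sup>2"
        using T1 T2 T3 T4 by (simp add: distrib_left)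
    qed
    finally show "(\<integral>\<^sup>+ \<xi>. ennreal ((sigma_hat_sq d s (obs \<theta> \<sigma> \<xi>) - \<sigma>\<^sup>2)\<^sup>2) \<partial>noise_law d P)
        \<le> ennreal (C * \<sigma> ^ 4 * (max (1 / sqrt (real d)) ((real s / real d) powr (1 - 2 / a)))\<^sup>2)"
      by (simp add: M_def B_def b_def \<rho>_def)
  qed
qed


end
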